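(* Let $J\subseteq S$. The poset $\mathrm{Weak}(\mathfrak{S}_n^J(231))$, i.e. the set $\mathfrak{S}_n^J(231)$ ordered by $u\le_S v\iff\mathrm{inv}(u)\subseteq\mathrm{inv}(v)$, is a lattice.
   Context: $\mathfrak{S}_n$ is the symmetric group on $[n]$, $s_i=(i,i+1)$, $S=\{s_1,\dots,s_{n-1}\}$, one-line notation $w=w_1\cdots w_n$, $\mathrm{inv}(w)=\{(i,j):i<j,\ w_i>w_j\}$. For $J\subseteq S$, $\mathfrak{S}_n^J$ is the set of $w$ with $w_i<w_{i+1}$ whenever $s_i\in J$. Writing $J=S\setminus\{s_{j_1},\dots,s_{j_r}\}$ with $j_1<\dots<j_r$, the $J$-regions are $\{1,\dots,j_1\},\{j_1+1,\dots,j_2\},\dots,\{j_r+1,\dots,n\}$. $\mathfrak{S}_n^J(231)$ is the set of $w\in\mathfrak{S}_n^J$ admitting no indices $i<j<k$ in pairwise different $J$-regions with $w_k<w_i<w_j$ and $w_i=w_k+1$. *)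

theory Defs
  imports "HOL-Combinatorics.Permutations"
begin

text \<open>Permutations of [n] are functions w :: nat => nat with w permutes {1..n};
  w i is the i-th letter in one-line notation. A subset J of S = {s_1,...,s_(n-1)}
  is represented by the set of indices i with s_i in J, a subset of {1..<n}.\<close>

definition inv_set :: "nat \<Rightarrow> (nat \<Rightarrow> nat) \<Rightarrow> (nat \<times> nat) set" where
  "inv_set n w = {(i, j). 1 \<le> i \<and> i < j \<and> j \<le> n \<and> w i > w j}"

definition parabolic_quotient :: "nat \<Rightarrow> nat set \<Rightarrow> (nat \<Rightarrow> nat) set" where
  "parabolic_quotient n J = {w. w permutes {1..n} \<and> (\<forall>i\<in>J. w i < w (Suc i))}"

definition same_region :: "nat set \<Rightarrow> nat \<Rightarrow> nat \<Rightarrow> bool" where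
  "same_region J p q = (\<forall>j. p \<le> j \<and> j < q \<longrightarrow> j \<in> J)"

definition avoids_J231 :: "nat \<Rightarrow> nat set \<Rightarrow> (nat \<Rightarrow> nat) \<Rightarrow> bool" where
  "avoids_J231 n J w = (\<not> (\<exists>i j k. 1 \<le> i \<and> i < j \<and> j < k \<and> k \<le> n \<and>
      \<not> same_region J i j \<and> \<not> same_region J j k \<and>
      w k < w i \<and> w i < w j \<and> w i = w k + 1))"

definition S_J_231 :: "nat \<Rightarrow> nat set \<Rightarrow> (nat \<Rightarrow> nat) set" where
  "S_J_231 n J = {w \<in> parabolic_quotient n J. avoids_J231 n J w}"

definition is_lub_in :: "('a \<Rightarrow> 'a \<Rightarrow> bool) \<Rightarrow> 'a set \<Rightarrow> 'a \<Rightarrow> 'a \<Rightarrow> 'a \<Rightarrow> bool" where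
  "is_lub_in le X x y z = (z \<in> X \<and> le x z \<and> le y z \<and>
      (\<forall>u\<in>X. le x u \<and> le y u \<longrightarrow> le z u))"

definition is_glb_in :: "('a \<Rightarrow> 'a \<Rightarrow> bool) \<Rightarrow> 'a set \<Rightarrow> 'a \<Rightarrow> 'a \<Rightarrow> 'a \<Rightarrow> bool" where
  "is_glb_in le X x y z = (z \<in> X \<and> le z x \<and> le z y \<and>
      (\<forall>u\<in>X. le u x \<and> le u y \<longrightarrow> le u z))"

definition is_lattice_on :: "('a \<Rightarrow> 'a \<Rightarrow> bool) \<Rightarrow> 'a set \<Rightarrow> bool" where
  "is_lattice_on le X = (\<forall>x\<in>X. \<forall>y\<in>X. (\<exists>z. is_lub_in le X x y z) \<and> (\<exists>z. is_glb_in le X x y z))"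

definition weak_le :: "nat \<Rightarrow> (nat \<Rightarrow> nat) \<Rightarrow> (nat \<Rightarrow> nat) \<Rightarrow> bool" where
  "weak_le n u v = (inv_set n u \<subseteq> inv_set n v)"

end

theory Submission
  imports Defs
begin

definition pairs_le :: "nat \<Rightarrow> (nat \<times> nat) set" where
  "pairs_le n = {(i,j). 1 \<le> i \<and> i < j \<and> j \<le> n}"

definition cotrans :: "(nat \<times> nat) set \<Rightarrow> bool" where
  "cotrans T = (\<forall>i j k. i < j \<and> j < k \<and> (i,k) \<in> T \<longrightarrow> (i,j) \<in> T \<or> (j,k) \<in> T)"

lemma inv_set_sub: "inv_set n w \<subseteq> pairs_le n"
  by (auto simp: inv_set_def pairs_le_def)

lemma inv_set_trans: "trans (inv_set n w)"
  by (auto simp: trans_def inv_set_def)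

lemma inv_set_cotrans: "cotrans (inv_set n w)"
  by (auto simp: cotrans_def inv_set_def)

lemma trancl_pairs_aux: "(a,b) \<in> U\<^sup>+ \<Longrightarrow> U \<subseteq> pairs_le n \<Longrightarrow> (a,b) \<in> pairs_le n"
  by (induct rule: trancl_induct) (auto simp: pairs_le_def)

lemma trancl_pairs: "U \<subseteq> pairs_le n \<Longrightarrow> U\<^sup>+ \<subseteq> pairs_le n"
  using trancl_pairs_aux by fast

lemma trancl_cotrans:
  assumes A: "cotrans A" and B: "cotrans B" and sub: "A \<union> B \<subseteq> pairs_le n"
  shows "cotrans ((A \<union> B)\<^sup>+)"
proof -
  let ?U = "A \<union> B"
  have cU: "cotrans ?U" using A B unfolding cotrans_def by blast
  have "\<forall>j. i < j \<and> j < k \<longrightarrow> (i,j) \<in> ?U\<^sup>+ \<or> (j,k) \<in> ?U\<^sup>+" if "(i,k) \<in> ?U\<^sup>+" for i k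
    using that
  proof (induct rule: trancl_induct)
    case (base y)
    then show ?case using cU unfolding cotrans_def by blast
  next
    case (step y z)
    have yz: "y < z" using step(2) sub by (auto simp: pairs_le_def)
    show ?case
    proof (intro allI impI)
      fix j assume j: "i < j \<and> j < z"
      consider "j < y" | "j = y" | "y < j" by linarith
      then show "(i,j) \<in> ?U\<^sup>+ \<or> (j,z) \<in> ?U\<^sup>+"
      proof cases
        case 1
        then have "(i,j) \<in> ?U\<^sup>+ \<or> (j,y) \<in> ?U\<^sup>+" using step(3) j by blast
        then show ?thesis using step(2) by (meson trancl_into_trancl)
      next
        case 2 then show ?thesis using step(1) by simp
      next
        case 3
        then have "(y,j) \<in> ?U \<or> (j,z) \<in> ?U" using cU step(2) j unfolding cotrans_def by blast
        then show ?thesis using step(1) by (meson trancl_into_trancl r_into_trancl)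
      qed
    qed
  qed
  then show ?thesis unfolding cotrans_def by blast
qed

lemma exists_perm:
  assumes sub: "T \<subseteq> pairs_le n" and tr: "trans T" and ct: "cotrans T"
  shows "\<exists>w. w permutes {1..n} \<and> inv_set n w = T"
proof -
  define prec where "prec = (\<lambda>i j. (i < j \<and> (i,j) \<notin> T) \<or> (j < i \<and> (j,i) \<in> T))"
  have irr: "\<not> prec i i" for i by (simp add: prec_def)
  have tot: "i \<noteq> j \<Longrightarrow> prec i j \<or> prec j i" for i j by (auto simp: prec_def)
  have ptrans: "prec i k" if h1: "prec i j" and h2: "prec j k" for i j k
  proof -
    have Tlt: "(a,b) \<in> T \<Longrightarrow> a < b" for a b using sub by (auto simp: pairs_le_def)
    have t: "(a,b) \<in> T \<Longrightarrow> (b,c) \<in> T \<Longrightarrow> (a,c) \<in> T" for a b c using tr by (meson transD)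
    have c: "a < b \<Longrightarrow> b < c \<Longrightarrow> (a,c) \<in> T \<Longrightarrow> (a,b) \<in> T \<or> (b,c) \<in> T" for a b c
      using ct unfolding cotrans_def by blast
    consider (a) "i < j" "(i,j) \<notin> T" "j < k" "(j,k) \<notin> T"
      | (b) "i < j" "(i,j) \<notin> T" "k < j" "(k,j) \<in> T"
      | (c) "j < i" "(j,i) \<in> T" "j < k" "(j,k) \<notin> T"
      | (d) "j < i" "(j,i) \<in> T" "k < j" "(k,j) \<in> T"
      using h1 h2 unfolding prec_def by blast
    then show ?thesis
    proof cases
      case a then show ?thesis using c[of i j k] by (auto simp: prec_def)
    next
      case b
      consider "i < k" | "i = k" | "k < i" by linarith
      then show ?thesis
      proof cases
        case 1 then show ?thesis using b t[of i k j] by (auto simp: prec_def)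
      next
        case 2 then show ?thesis using b by simp
      next
        case 3 then show ?thesis using b c[of k i j] by (auto simp: prec_def)
      qed
    next
      case cc: c
      consider "i < k" | "i = k" | "k < i" by linarith
      then show ?thesis
      proof cases
        case 1 then show ?thesis using cc t[of j i k] by (auto simp: prec_def)
      next
        case 2 then show ?thesis using cc by simp
      next
        case 3 then show ?thesis using cc c[of j k i] by (auto simp: prec_def)
      qed
    next
      case d then show ?thesis using t[of k j i] by (auto simp: prec_def)
    qed
  qed
  define w where "w = (\<lambda>i. if i \<in> {1..n} then Suc (card {j\<in>{1..n}. prec j i}) else i)"
  have mono: "w i < w j" if "i\<in>{1..n}" "j\<in>{1..n}" "prec i j" for i j
  proof -
    have s1: "{x\<in>{1..n}. prec x i} \<subseteq> {x\<in>{1..n}. prec x j}"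
      using that ptrans by blast
    have s2: "i \<in> {x\<in>{1..n}. prec x j} - {x\<in>{1..n}. prec x i}"
      using that irr by blast
    have "{x\<in>{1..n}. prec x i} \<subset> {x\<in>{1..n}. prec x j}"
      using s1 s2 by blast
    then have "card {x\<in>{1..n}. prec x i} < card {x\<in>{1..n}. prec x j}"
      by (intro psubset_card_mono) auto
    then show ?thesis using that unfolding w_def by auto
  qed
  have range: "w i \<in> {1..n}" if "i\<in>{1..n}" for i
  proof -
    have "{j\<in>{1..n}. prec j i} \<subseteq> {1..n} - {i}" using irr by auto
    then have "card {j\<in>{1..n}. prec j i} \<le> card ({1..n} - {i})" by (intro card_mono) auto
    also have "\<dots> = n - 1" using that by simp
    finally show ?thesis using that by (auto simp: w_def)
  qed
  have inj: "inj_on w {1..n}"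
  proof (rule inj_onI)
    fix i j assume "i \<in> {1..n}" "j \<in> {1..n}" "w i = w j"
    then show "i = j" using tot mono by (metis less_irrefl)
  qed
  have img: "w ` {1..n} = {1..n}"
    by (rule endo_inj_surj) (use range inj in auto)
  have perm: "w permutes {1..n}"
  proof (rule bij_imp_permutes)
    show "bij_betw w {1..n} {1..n}" using inj img by (simp add: bij_betw_def)
    show "w x = x" if "x \<notin> {1..n}" for x using that unfolding w_def by auto
  qed
  have "inv_set n w = T"
  proof
    show "inv_set n w \<subseteq> T"
    proof
      fix p assume "p \<in> inv_set n w"
      then obtain i j where p: "p = (i,j)" "1 \<le> i" "i < j" "j \<le> n" "w j < w i"
        by (auto simp: inv_set_def)
      show "p \<in> T"
      proof (rule ccontr)
        assume "p \<notin> T"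
        then have "prec i j" using p by (simp add: prec_def)
        then have "w i < w j" using mono p by auto
        then show False using p by simp
      qed
    qed
  next
    show "T \<subseteq> inv_set n w"
    proof
      fix p assume pT: "p \<in> T"
      then obtain i j where p: "p = (i,j)" "1 \<le> i" "i < j" "j \<le> n"
        using sub by (auto simp: pairs_le_def)
      then have "prec j i" using pT by (simp add: prec_def)
      then have "w j < w i" using mono p by auto
      then show "p \<in> inv_set n w" using p by (simp add: inv_set_def)
    qed
  qed
  then show ?thesis using perm by blast
qed

lemma join_exists:
  "\<exists>z. z permutes {1..n} \<and> inv_set n z = (inv_set n u \<union> inv_set n v)\<^sup>+"
proof (rule exists_perm)
  show "(inv_set n u \<union> inv_set n v)\<^sup>+ \<subseteq> pairs_le n"
    by (rule trancl_pairs) (use inv_set_sub in blast)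
  show "trans ((inv_set n u \<union> inv_set n v)\<^sup>+)" by (rule trans_trancl)
  show "cotrans ((inv_set n u \<union> inv_set n v)\<^sup>+)"
    by (rule trancl_cotrans[OF inv_set_cotrans inv_set_cotrans, of _ _ _ _ n])
      (use inv_set_sub in blast)
qed

lemma same_region_mono:
  "same_region J p q \<Longrightarrow> p \<le> p' \<Longrightarrow> q' \<le> q \<Longrightarrow> same_region J p' q'"
  by (auto simp: same_region_def)

lemma core:
  assumes u: "u \<in> S_J_231 n J" and zperm: "z permutes {1..n}"
    and sub: "inv_set n u \<subseteq> inv_set n z"
    and ik: "(i,k) \<in> inv_set n u" and ij: "(i,j) \<notin> inv_set n u"
    and ijk: "i < j" "j < k"
    and adj: "z i = z k + 1"
    and r1: "\<not> same_region J i j" and r2: "\<not> same_region J j k"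
  shows False
proof -
  have uperm: "u permutes {1..n}" and av: "avoids_J231 n J u"
    using u by (auto simp: S_J_231_def parabolic_quotient_def)
  from ik have i1: "1 \<le> i" and kn: "k \<le> n" and uik: "u k < u i" by (auto simp: inv_set_def)
  have inI: "x \<in> {1..n} \<Longrightarrow> u x \<in> {1..n}" for x by (rule permutes_in_image[OF uperm, THEN iffD2])
  have injU: "u x = u y \<Longrightarrow> x = y" for x y using uperm by (meson permutes_inj injD)
  have uij: "u i < u j"
  proof -
    have "u i \<noteq> u j" using injU ijk by auto
    then show ?thesis using ij i1 ijk kn by (auto simp: inv_set_def)
  qed
  have nobetween: "\<not> (u k < u m \<and> u m < u i)" if "i < m" "m < k" for m
  proof
    assume "u k < u m \<and> u m < u i"
    then have "(i,m) \<in> inv_set n u" "(m,k) \<in> inv_set n u"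
      using that i1 kn by (auto simp: inv_set_def)
    then have "(i,m) \<in> inv_set n z" "(m,k) \<in> inv_set n z"
      using sub by auto
    then show False using adj by (auto simp: inv_set_def)
  qed
  define S where "S = {v. u k \<le> v \<and> v < u i \<and> (\<exists>q. k \<le> q \<and> q \<le> n \<and> u q = v)}"
  have finS: "finite S" by (rule finite_subset[of _ "{..<u i}"]) (auto simp: S_def)
  have "u k \<in> S" using uik kn by (auto simp: S_def)
  then have neS: "S \<noteq> {}" by blast
  define b where "b = Max S"
  have bS: "b \<in> S" using finS neS by (simp add: b_def)
  have bmax: "x \<in> S \<Longrightarrow> x \<le> b" for x using finS by (simp add: b_def)
  from bS obtain q where q: "k \<le> q" "q \<le> n" "u q = b" and bi: "b < u i" and kb: "u k \<le> b"
    by (auto simp: S_def)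
  have "u i \<in> {1..n}" using inI i1 ijk kn by auto
  then have "b + 1 \<in> {1..n}" using bi by auto
  then have "b + 1 \<in> u ` {1..n}" using uperm by (simp add: permutes_image)
  then obtain p where p: "p \<in> {1..n}" "u p = b + 1" by auto
  have pi: "p \<le> i"
  proof (rule ccontr)
    assume "\<not> p \<le> i"
    then have ip: "i < p" by simp
    show False
    proof (cases "k \<le> p")
      case True
      show False
      proof (cases "b + 1 < u i")
        case True
        then have "b + 1 \<in> S" using \<open>k \<le> p\<close> p kb by (auto simp: S_def)
        then show False using bmax by fastforce
      next
        case False
        then have "u p = u i" using p bi by simp
        then show False using injU ip by auto
      qed
    next
      case False
      have "u p \<noteq> u i" using injU ip by auto
      then have "u k < u p \<and> u p < u i" using p kb bi by auto
      then show False using nobetween ip False by auto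
    qed
  qed
  have "1 \<le> p" "p < j" "j < q" "q \<le> n" using p pi ijk q by auto
  moreover have "\<not> same_region J p j" using r1 pi same_region_mono by blast
  moreover have "\<not> same_region J j q" using r2 q same_region_mono by blast
  moreover have "u q < u p" "u p < u j" "u p = u q + 1" using p q bi uij by auto
  ultimately show False using av unfolding avoids_J231_def by blast
qed

lemma join_in:
  assumes J: "J \<subseteq> {1..<n}"
    and u: "u \<in> S_J_231 n J" and v: "v \<in> S_J_231 n J" and z: "z permutes {1..n}"
    and zi: "inv_set n z = (inv_set n u \<union> inv_set n v)\<^sup>+"
  shows "z \<in> S_J_231 n J"
proof -
  let ?U = "inv_set n u \<union> inv_set n v"
  have subU: "?U \<subseteq> inv_set n z" using zi by auto
  have Usub: "?U \<subseteq> pairs_le n" using inv_set_sub by blast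
  have Tsub: "?U\<^sup>+ \<subseteq> pairs_le n" using trancl_pairs[OF Usub] .
  have injZ: "z x = z y \<Longrightarrow> x = y" for x y using z by (meson permutes_inj injD)
  have upar: "\<forall>i\<in>J. u i < u (Suc i)" and vpar: "\<forall>i\<in>J. v i < v (Suc i)"
    using u v by (simp_all add: S_J_231_def parabolic_quotient_def)
  have par: "\<forall>i\<in>J. z i < z (Suc i)"
  proof
    fix i assume iJ: "i \<in> J"
    then have i: "1 \<le> i" "i < n" using J by auto
    show "z i < z (Suc i)"
    proof (rule ccontr)
      assume "\<not> z i < z (Suc i)"
      moreover have "z i \<noteq> z (Suc i)" using injZ[of i "Suc i"] by auto
      ultimately have "z (Suc i) < z i" by simp
      then have "(i, Suc i) \<in> inv_set n z" using i by (simp add: inv_set_def)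
      then have "(i, Suc i) \<in> ?U\<^sup>+" using zi by simp
      then show False
      proof (rule tranclE)
        assume "(i, Suc i) \<in> ?U"
        then have "u (Suc i) < u i \<or> v (Suc i) < v i" by (auto simp: inv_set_def)
        then show False using upar vpar iJ by force
      next
        fix c assume "(i,c) \<in> ?U\<^sup>+" "(c, Suc i) \<in> ?U"
        then have "(i,c) \<in> pairs_le n" "(c, Suc i) \<in> pairs_le n" using Tsub Usub by blast+
        then have "i < c" "c < Suc i" by (auto simp: pairs_le_def)
        then show False by simp
      qed
    qed
  qed
  have av: "avoids_J231 n J z"
    unfolding avoids_J231_def
  proof
    assume "\<exists>i j k. 1 \<le> i \<and> i < j \<and> j < k \<and> k \<le> n \<and>
      \<not> same_region J i j \<and> \<not> same_region J j k \<and>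
      z k < z i \<and> z i < z j \<and> z i = z k + 1"
    then obtain i j k where h: "1 \<le> i" "i < j" "j < k" "k \<le> n"
      "\<not> same_region J i j" "\<not> same_region J j k" "z k < z i" "z i < z j" "z i = z k + 1"
      by blast
    have "(i,k) \<in> inv_set n z" using h by (simp add: inv_set_def)
    then have ikT: "(i,k) \<in> ?U\<^sup>+" using zi by simp
    have ikU: "(i,k) \<in> ?U"
      using ikT
    proof (rule tranclE)
      fix c assume "(i,c) \<in> ?U\<^sup>+" "(c,k) \<in> ?U"
      then have "(i,c) \<in> inv_set n z" "(c,k) \<in> inv_set n z" using zi subU by auto
      then have "z c < z i" "z k < z c" by (simp_all add: inv_set_def)
      then show ?thesis using h(9) by simp
    qed
    have ijz: "(i,j) \<notin> inv_set n z" using h(8) by (simp add: inv_set_def)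
    have usub: "inv_set n u \<subseteq> inv_set n z" and vsub: "inv_set n v \<subseteq> inv_set n z"
      using subU by blast+
    have iju: "(i,j) \<notin> inv_set n u" and ijv: "(i,j) \<notin> inv_set n v" using ijz usub vsub by blast+
    show False
    proof (cases "(i,k) \<in> inv_set n u")
      case True
      show False by (rule core[OF u z usub True iju h(2,3,9,5,6)])
    next
      case False
      then have "(i,k) \<in> inv_set n v" using ikU by blast
      then show False by (rule core[OF v z vsub _ ijv h(2,3,9,5,6)])
    qed
  qed
  show ?thesis using z par av by (simp add: S_J_231_def parabolic_quotient_def)
qed

lemma inv_set_finite: "finite (inv_set n w)"
  by (rule finite_subset[OF inv_set_sub]) (auto simp: pairs_le_def intro: finite_subset[of _ "{1..n} \<times> {1..n}"])

lemma inv_set_card: "card (inv_set n w) < Suc (n * n)"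
proof -
  have "inv_set n w \<subseteq> {1..n} \<times> {1..n}" by (auto simp: inv_set_def)
  then have "card (inv_set n w) \<le> card ({1..n} \<times> {1..n})" by (intro card_mono) auto
  then show ?thesis by (simp add: card_cartesian_product)
qed

lemma lub_weak:
  assumes J: "J \<subseteq> {1..<n}" and a: "a \<in> S_J_231 n J" and b: "b \<in> S_J_231 n J"
  shows "\<exists>z. is_lub_in (weak_le n) (S_J_231 n J) a b z \<and>
      inv_set n z = (inv_set n a \<union> inv_set n b)\<^sup>+"
proof -
  obtain z where z: "z permutes {1..n}" "inv_set n z = (inv_set n a \<union> inv_set n b)\<^sup>+"
    using join_exists by blast
  have zS: "z \<in> S_J_231 n J" using join_in[OF J a b z] .
  have ub: "\<forall>w \<in> S_J_231 n J. weak_le n a w \<and> weak_le n b w \<longrightarrow> weak_le n z w"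
  proof (intro ballI impI)
    fix w assume "w \<in> S_J_231 n J" "weak_le n a w \<and> weak_le n b w"
    then have "inv_set n a \<union> inv_set n b \<subseteq> inv_set n w" by (simp add: weak_le_def)
    then have "(inv_set n a \<union> inv_set n b)\<^sup>+ \<subseteq> (inv_set n w)\<^sup>+" by (rule trancl_mono_subset)
    also have "(inv_set n w)\<^sup>+ = inv_set n w" by (rule trancl_id[OF inv_set_trans])
    finally show "weak_le n z w" using z(2) by (simp add: weak_le_def)
  qed
  have "weak_le n a z" "weak_le n b z" using z(2) by (auto simp: weak_le_def)
  then have "is_lub_in (weak_le n) (S_J_231 n J) a b z"
    unfolding is_lub_in_def using zS ub by blast
  then show ?thesis using z(2) by blast
qed

lemma lub_le:
  assumes "inv_set n a \<subseteq> inv_set n x" "inv_set n b \<subseteq> inv_set n x"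
  shows "(inv_set n a \<union> inv_set n b)\<^sup>+ \<subseteq> inv_set n x"
proof -
  have "(inv_set n a \<union> inv_set n b)\<^sup>+ \<subseteq> (inv_set n x)\<^sup>+"
    using assms by (intro trancl_mono_subset) blast
  also have "(inv_set n x)\<^sup>+ = inv_set n x" by (rule trancl_id[OF inv_set_trans])
  finally show ?thesis .
qed

theorem proposition3p10:
  fixes n :: nat and J :: "nat set"
  assumes "J \<subseteq> {1..<n}"
  shows "is_lattice_on (weak_le n) (S_J_231 n J)"
  unfolding is_lattice_on_def
proof (intro ballI conjI)
  fix x y assume x: "x \<in> S_J_231 n J" and y: "y \<in> S_J_231 n J"
  show "\<exists>z. is_lub_in (weak_le n) (S_J_231 n J) x y z" using lub_weak[OF assms x y] by blast
  define L where "L = {l \<in> S_J_231 n J. weak_le n l x \<and> weak_le n l y}"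
  have invid: "inv_set n id = {}" by (simp add: inv_set_def)
  have idS: "id \<in> S_J_231 n J"
    unfolding S_J_231_def parabolic_quotient_def avoids_J231_def
    by (simp add: permutes_id)
  have idL: "id \<in> L" unfolding L_def weak_le_def using idS invid by simp
  have "\<exists>g. g \<in> L \<and> (\<forall>l. l \<in> L \<longrightarrow> card (inv_set n l) \<le> card (inv_set n g))"
    by (rule ex_has_greatest_nat[of "\<lambda>l. l \<in> L", OF idL]) (use inv_set_card in blast)
  then obtain g where gL: "g \<in> L" and gmax: "\<And>l. l \<in> L \<Longrightarrow> card (inv_set n l) \<le> card (inv_set n g)"
    by blast
  have gS: "g \<in> S_J_231 n J" and gx: "inv_set n g \<subseteq> inv_set n x" and gy: "inv_set n g \<subseteq> inv_set n y"
    using gL by (auto simp: L_def weak_le_def)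
  have lg: "weak_le n l g" if lL: "l \<in> L" for l
  proof -
    have lS: "l \<in> S_J_231 n J" and lx: "inv_set n l \<subseteq> inv_set n x" and ly: "inv_set n l \<subseteq> inv_set n y"
      using lL by (auto simp: L_def weak_le_def)
    obtain z where z: "is_lub_in (weak_le n) (S_J_231 n J) g l z"
      and zi: "inv_set n z = (inv_set n g \<union> inv_set n l)\<^sup>+"
      using lub_weak[OF assms gS lS] by blast
    have zS: "z \<in> S_J_231 n J" using z by (simp add: is_lub_in_def)
    have zx: "inv_set n z \<subseteq> inv_set n x" unfolding zi by (rule lub_le[OF gx lx])
    have zy: "inv_set n z \<subseteq> inv_set n y" unfolding zi by (rule lub_le[OF gy ly])
    have zL: "z \<in> L" unfolding L_def weak_le_def using zS zx zy by blast
    have gz: "inv_set n g \<subseteq> inv_set n z" unfolding zi by (auto intro: r_into_trancl)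
    have lz: "inv_set n l \<subseteq> inv_set n z" unfolding zi by (auto intro: r_into_trancl)
    have "card (inv_set n z) \<le> card (inv_set n g)" by (rule gmax[OF zL])
    then have "inv_set n g = inv_set n z" by (rule card_seteq[OF inv_set_finite gz])
    then show ?thesis using lz by (simp add: weak_le_def)
  qed
  have "is_glb_in (weak_le n) (S_J_231 n J) x y g"
    unfolding is_glb_in_def
  proof (intro conjI ballI impI)
    show "g \<in> S_J_231 n J" by (rule gS)
    show "weak_le n g x" "weak_le n g y" using gx gy by (simp_all add: weak_le_def)
    fix u assume "u \<in> S_J_231 n J" "weak_le n u x \<and> weak_le n u y"
    then have "u \<in> L" by (simp add: L_def)
    then show "weak_le n u g" by (rule lg)
  qed
  then show "\<exists>z. is_glb_in (weak_le n) (S_J_231 n J) x y z" by blast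
qed

end
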